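(* For $h\in(0,1)$, every finite $\Lambda\subset\mathbb Z^d$ and all $t\in\mathbb N^*$, $$|\Lambda|\,P\Big[|\bar N_{t-1}|^h\,\big|(\bar a*\rho_{t-1})^2\big|\Big]\ge P\big[|\bar N_{t-1}|^h\big]-2\,P_S^0(S_t\notin\Lambda)^h,$$ where $|\Lambda|$ is the cardinality of $\Lambda$.
   Context: Let $d\ge1$. For $x\in\mathbb R^d$, $|x|=\sum_i|x_i|$; for $\xi\in\mathbb R^{\mathbb Z^d}$, $|\xi|=\sum_{x}|\xi_x|$; $\xi^2$ denotes $(\xi_x^2)_x$; convolution $(f*g)_x=\sum_yf_{x-y}g_y$. Let $A_t=(A_{t,x,y})_{x,y\in\mathbb Z^d}$, $t=1,2,\dots$, be i.i.d. random matrices on a probability space $(\Omega,\mathcal F,P)$ such that: (i) $A_{1,x,y}\ge0$; (ii) the columns $\{A_{1,\cdot,y}\}_{y\in\mathbb Z^d}$ are independent; (iii) $P[A_{1,x,y}^2]<\infty$ for all $x,y$; (iv) there is a nonrandom $r_A\in\mathbb N$ with $A_{1,x,y}=0$ a.s. if $|x-y|>r_A$; (v) $(A_{1,x+z,y+z})_{x,y}$ has the same law as $A_1$ for every $z\in\mathbb Z^d$; (vi) with $a_y=P[A_{1,0,y}]$, the set $\{x:\sum_y a_{x+y}a_y\neq0\}$ contains a linear basis of $\mathbb R^d$. Put $|a|=\sum_y a_y$, $\bar a_y=a_y/|a|$. Let $N_0=(\delta_{0,x})_{x\in\mathbb Z^d}$ and $N_{t,y}=\sum_xN_{t-1,x}A_{t,x,y}$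 ($t\ge1$), $|N_t|=\sum_yN_{t,y}$, $\bar N_{t,x}=|a|^{-t}N_{t,x}$, $\rho_{t,x}=\frac{N_{t,x}}{|N_t|}\mathbf 1_{\{|N_t|>0\}}$. $((S_t)_{t\in\mathbb N},P_S^0)$ is the random walk started at $0$ with step law $\bar a$. *)

theory Defs
  imports "HOL-Probability.Probability"
begin

text \<open>Sites of Z^d are modelled as int ^ 'd with 'd a finite type (d = CARD('d) \<ge> 1).\<close>

definition l1norm :: "int ^ 'd \<Rightarrow> int" where
  "l1norm x = (\<Sum>i\<in>UNIV. \<bar>x $ i\<bar>)"

definition total :: "(int ^ 'd \<Rightarrow> real) \<Rightarrow> real" where
  "total \<xi> = (\<Sum>\<^sub>\<infinity>x. \<bar>\<xi> x\<bar>)"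

definition conv :: "(int ^ 'd \<Rightarrow> real) \<Rightarrow> (int ^ 'd \<Rightarrow> real) \<Rightarrow> int ^ 'd \<Rightarrow> real" where
  "conv f g x = (\<Sum>\<^sub>\<infinity>y. f (x - y) * g y)"

fun popN :: "(nat \<Rightarrow> 'w \<Rightarrow> int ^ 'd \<Rightarrow> int ^ 'd \<Rightarrow> real) \<Rightarrow> nat \<Rightarrow> 'w \<Rightarrow> int ^ 'd \<Rightarrow> real" where
  "popN A 0 \<omega> x = (if x = 0 then 1 else 0)"
| "popN A (Suc t) \<omega> y = (\<Sum>\<^sub>\<infinity>x. popN A t \<omega> x * A (Suc t) \<omega> x y)"

definition meanA :: "'w measure \<Rightarrow> (nat \<Rightarrow> 'w \<Rightarrow> int ^ 'd \<Rightarrow> int ^ 'd \<Rightarrow> real) \<Rightarrow> int ^ 'd \<Rightarrow> real" where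
  "meanA M A y = (\<integral>\<omega>. A 1 \<omega> 0 y \<partial>M)"

definition abar :: "'w measure \<Rightarrow> (nat \<Rightarrow> 'w \<Rightarrow> int ^ 'd \<Rightarrow> int ^ 'd \<Rightarrow> real) \<Rightarrow> int ^ 'd \<Rightarrow> real" where
  "abar M A y = meanA M A y / total (meanA M A)"

definition Nbar :: "'w measure \<Rightarrow> (nat \<Rightarrow> 'w \<Rightarrow> int ^ 'd \<Rightarrow> int ^ 'd \<Rightarrow> real) \<Rightarrow> nat \<Rightarrow> 'w \<Rightarrow> int ^ 'd \<Rightarrow> real" where
  "Nbar M A t \<omega> x = popN A t \<omega> x / total (meanA M A) ^ t"

definition rho :: "(nat \<Rightarrow> 'w \<Rightarrow> int ^ 'd \<Rightarrow> int ^ 'd \<Rightarrow> real) \<Rightarrow> nat \<Rightarrow> 'w \<Rightarrow> int ^ 'd \<Rightarrow> real" where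
  "rho A t \<omega> x = (if total (popN A t \<omega>) > 0 then popN A t \<omega> x / total (popN A t \<omega>) else 0)"

text \<open>Law of S_t for the random walk started at 0 with step law p: rw_dist p t x = P_S^0(S_t = x).\<close>
fun rw_dist :: "(int ^ 'd \<Rightarrow> real) \<Rightarrow> nat \<Rightarrow> int ^ 'd \<Rightarrow> real" where
  "rw_dist p 0 x = (if x = 0 then 1 else 0)"
| "rw_dist p (Suc t) x = (\<Sum>\<^sub>\<infinity>y. rw_dist p t (x - y) * p y)"

definition to_real_vec :: "int ^ 'd \<Rightarrow> real ^ 'd" where
  "to_real_vec x = (\<chi> i. real_of_int (x $ i))"

end

theory Submission
  imports Defs
begin


lemma infsum_nat_real_eq:
  fixes g :: "nat \<Rightarrow> real"
  shows "infsum g UNIV = (if (\<Sum>n. ennreal \<bar>g n\<bar>) \<noteq> top then suminf g else 0)"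
proof (cases "(\<Sum>n. ennreal \<bar>g n\<bar>) \<noteq> top")
  case True
  then have s: "summable (\<lambda>n. norm (g n))"
    using summable_suminf_not_top[of "\<lambda>n. \<bar>g n\<bar>"] by auto
  then have "summable g" using summable_norm_cancel by blast
  then have "(g has_sum suminf g) UNIV"
    using norm_summable_imp_has_sum[OF s] summable_sums by blast
  then show ?thesis using True by (simp add: infsumI)
next
  case False
  then have "\<not> summable (\<lambda>n. norm (g n))"
    using ennreal_suminf_neq_top[of "\<lambda>n. \<bar>g n\<bar>"] by auto
  then have "\<not> (\<lambda>n. norm (g n)) summable_on UNIV"
    using summable_on_UNIV_nonneg_real_iff[of "\<lambda>n. norm (g n)"] by auto
  then have "\<not> g summable_on UNIV"
    using summable_on_iff_abs_summable_on_real by blast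
  then show ?thesis using False by (simp add: infsum_not_exists)
qed

lemma measurable_infsum_nat:
  fixes f :: "nat \<Rightarrow> 'a \<Rightarrow> real"
  assumes [measurable]: "\<And>i. f i \<in> borel_measurable N"
  shows "(\<lambda>\<omega>. infsum (\<lambda>i. f i \<omega>) UNIV) \<in> borel_measurable N"
  unfolding infsum_nat_real_eq by measurable

lemma measurable_infsum_countable:
  fixes f :: "'i::countable \<Rightarrow> 'a \<Rightarrow> real"
  assumes m: "\<And>i. f i \<in> borel_measurable N"
  shows "(\<lambda>\<omega>. \<Sum>\<^sub>\<infinity>i. f i \<omega>) \<in> borel_measurable N"
proof (cases "finite (UNIV :: 'i set)")
  case True
  then show ?thesis using m by simp
next
  case False
  define e where "e = from_nat_into (UNIV :: 'i set)"
  have b: "bij_betw e UNIV UNIV"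
    unfolding e_def using False by (intro bij_betw_from_nat_into) auto
  have "(\<lambda>\<omega>. \<Sum>\<^sub>\<infinity>i. f i \<omega>) = (\<lambda>\<omega>. \<Sum>\<^sub>\<infinity>n. f (e n) \<omega>)"
    by (intro ext) (rule infsum_reindex_bij_betw[OF b, symmetric])
  also have "\<dots> \<in> borel_measurable N"
    by (rule measurable_infsum_nat) (rule m)
  finally show ?thesis .
qed



lemma infsum_fin:
  fixes f :: "'a \<Rightarrow> real"
  assumes "finite F" "F \<subseteq> S" "\<And>x. x \<in> S - F \<Longrightarrow> f x = 0"
  shows "infsum f S = sum f F"
  using has_sum_finite_neutralI[OF assms refl] by (rule infsumI)

lemma summable_fin:
  fixes f :: "'a \<Rightarrow> real"
  assumes "finite F" "\<And>x. x \<in> S - F \<Longrightarrow> f x = 0"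
  shows "f summable_on S"
proof -
  have "f summable_on (S \<inter> F)" using assms(1) by simp
  then show ?thesis
    by (rule summable_on_cong_neutral[THEN iffD1, rotated -1]) (use assms in auto)
qed

definition Bl :: "int \<Rightarrow> (int ^ 'd::finite) set" where
  "Bl r = {x. l1norm x \<le> r}"

lemma l1norm_nonneg: "0 \<le> l1norm x"
  unfolding l1norm_def by (simp add: sum_nonneg)

lemma l1norm_add: "l1norm (x + y) \<le> l1norm x + l1norm y"
  unfolding l1norm_def by (simp add: sum.distrib[symmetric] abs_triangle_ineq sum_mono)

lemma l1norm_minus: "l1norm (- x) = l1norm x"
  unfolding l1norm_def by simp

lemma l1norm_zero[simp]: "l1norm 0 = 0"
  unfolding l1norm_def by simp

lemma l1norm_comp: "\<bar>x $ i\<bar> \<le> l1norm x"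
  unfolding l1norm_def by (rule member_le_sum) auto

lemma finite_Bl: "finite (Bl r :: (int ^ 'd::finite) set)"
proof -
  have "(Bl r :: (int^'d) set) \<subseteq> vec_lambda ` (PiE UNIV (\<lambda>_. {-r..r}))"
  proof
    fix x :: "int ^ 'd" assume "x \<in> Bl r"
    have "\<bar>x $ i\<bar> \<le> r" for i using l1norm_comp[of x i] \<open>x \<in> Bl r\<close> unfolding Bl_def by simp
    have "\<forall>i. x $ i \<in> {-r..r}"
    proof
      fix i have "\<bar>x $ i\<bar> \<le> r" by fact
      then show "x $ i \<in> {-r..r}" by (auto simp: abs_le_iff)
    qed
    then have "vec_nth x \<in> PiE UNIV (\<lambda>_. {-r..r})" by auto
    then show "x \<in> vec_lambda ` (PiE UNIV (\<lambda>_. {-r..r}))"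
      by (intro image_eqI[of _ _ "vec_nth x"]) auto
  qed
  moreover have "finite (vec_lambda ` (PiE UNIV (\<lambda>_. {-r..r})) :: (int^'d) set)"
    by (intro finite_imageI finite_PiE) auto
  ultimately show ?thesis by (rule finite_subset)
qed

lemma finite_Bl'[simp]: "finite {x::int^'d::finite. l1norm x \<le> r}"
  using finite_Bl[of r] unfolding Bl_def .

lemma popN_det:
  fixes A :: "nat \<Rightarrow> 'w \<Rightarrow> int ^ 'd::finite \<Rightarrow> int ^ 'd \<Rightarrow> real"
  assumes G: "\<forall>s\<in>{1..n}. \<forall>x y. 0 \<le> A s \<omega> x y \<and> (int R < l1norm (x - y) \<longrightarrow> A s \<omega> x y = 0)"
  shows "s \<le> n \<Longrightarrow> (\<forall>x. 0 \<le> popN A s \<omega> x) \<and> (\<forall>x. int (s*R) < l1norm x \<longrightarrow> popN A s \<omega> x = 0)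
      \<and> (s < n \<longrightarrow> (\<forall>y. popN A (Suc s) \<omega> y = (\<Sum>x\<in>Bl (int (s*R)). popN A s \<omega> x * A (Suc s) \<omega> x y)))"
proof (induction s)
  case 0
  show ?case
  proof (intro conjI allI impI)
    fix y assume "0 < n"
    have "popN A (Suc 0) \<omega> y = (\<Sum>\<^sub>\<infinity>x. popN A 0 \<omega> x * A (Suc 0) \<omega> x y)" by simp
    also have "\<dots> = (\<Sum>x\<in>Bl (int (0*R)). popN A 0 \<omega> x * A (Suc 0) \<omega> x y)"
      by (rule infsum_fin) (auto simp: finite_Bl Bl_def l1norm_nonneg)
    finally show "popN A (Suc 0) \<omega> y = (\<Sum>x\<in>Bl (int (0*R)). popN A 0 \<omega> x * A (Suc 0) \<omega> x y)" .
  qed (auto simp: l1norm_nonneg)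
next
  case (Suc s)
  then have IH: "\<forall>x. 0 \<le> popN A s \<omega> x" "\<forall>x. int (s*R) < l1norm x \<longrightarrow> popN A s \<omega> x = 0"
     and rec: "\<forall>y. popN A (Suc s) \<omega> y = (\<Sum>x\<in>Bl (int (s*R)). popN A s \<omega> x * A (Suc s) \<omega> x y)"
    by auto
  have As: "\<forall>x y. 0 \<le> A (Suc s) \<omega> x y \<and> (int R < l1norm (x - y) \<longrightarrow> A (Suc s) \<omega> x y = 0)"
    using G Suc.prems by auto
  have nn: "\<forall>x. 0 \<le> popN A (Suc s) \<omega> x"
    using rec IH As by (auto intro!: sum_nonneg)
  have sup: "\<forall>y. int (Suc s*R) < l1norm y \<longrightarrow> popN A (Suc s) \<omega> y = 0"
  proof (intro allI impI)
    fix y :: "int^'d" assume y: "int (Suc s*R) < l1norm y"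
    have "popN A s \<omega> x * A (Suc s) \<omega> x y = 0" if "x \<in> Bl (int (s*R))" for x
    proof -
      have "l1norm y \<le> l1norm x + l1norm (y - x)" using l1norm_add[of x "y - x"] by simp
      moreover have "l1norm x \<le> int (s*R)" using that by (simp add: Bl_def)
      ultimately have "int R < l1norm (y - x)" using y by simp
      then have "l1norm (x - y) > int R" using l1norm_minus[of "y - x"] by simp
      then show ?thesis using As by simp
    qed
    then have "(\<Sum>x\<in>Bl (int (s*R)). popN A s \<omega> x * A (Suc s) \<omega> x y) = 0"
      by (intro sum.neutral) blast
    then show "popN A (Suc s) \<omega> y = 0" using rec by metis
  qed
  show ?case
  proof (intro conjI allI impI)
    fix y assume "Suc s < n"
    have "popN A (Suc (Suc s)) \<omega> y = (\<Sum>\<^sub>\<infinity>x. popN A (Suc s) \<omega> x * A (Suc (Suc s)) \<omega> x y)" by simp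
    also have "\<dots> = (\<Sum>x\<in>Bl (int (Suc s*R)). popN A (Suc s) \<omega> x * A (Suc (Suc s)) \<omega> x y)"
      by (rule infsum_fin) (use sup in \<open>auto simp: finite_Bl Bl_def\<close>)
    finally show "popN A (Suc (Suc s)) \<omega> y = (\<Sum>x\<in>Bl (int (Suc s*R)). popN A (Suc s) \<omega> x * A (Suc (Suc s)) \<omega> x y)" .
  qed (use nn sup in auto)
qed



lemma bij_minus_left: "bij_betw (\<lambda>y. x - y) UNIV (UNIV :: (int^'d::finite) set)"
  by (rule bij_betwI[of _ _ _ "\<lambda>y. x - y"]) auto

lemma bij_minus_right: "bij_betw (\<lambda>x. x - y) UNIV (UNIV :: (int^'d::finite) set)"
  by (rule bij_betwI[of _ _ _ "\<lambda>x. x + y"]) auto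

lemma conv_reindex:
  fixes f g :: "int^'d::finite \<Rightarrow> real"
  assumes "finite F" "\<And>y. y \<notin> F \<Longrightarrow> f y = 0"
  shows "(\<Sum>\<^sub>\<infinity>z. f (x - z) * g z) = (\<Sum>y\<in>F. f y * g (x - y))"
proof -
  have "(\<Sum>\<^sub>\<infinity>y. f (x - (x - y)) * g (x - y)) = (\<Sum>\<^sub>\<infinity>z. f (x - z) * g z)"
    by (rule infsum_reindex_bij_betw[OF bij_minus_left])
  then have "(\<Sum>\<^sub>\<infinity>z. f (x - z) * g z) = (\<Sum>\<^sub>\<infinity>y. f y * g (x - y))" by simp
  also have "\<dots> = (\<Sum>y\<in>F. f y * g (x - y))" by (rule infsum_fin) (use assms in auto)
  finally show ?thesis .
qed

lemma ab_facts:
  fixes a :: "int^'d::finite \<Rightarrow> real"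
  assumes a0: "\<forall>y. 0 \<le> a y" and asup: "\<forall>y. int R < l1norm y \<longrightarrow> a y = 0" and Zp: "0 < total a"
  shows "\<forall>y. 0 \<le> a y / total a" "\<forall>y. int R < l1norm y \<longrightarrow> a y / total a = 0"
    "\<forall>y. (\<Sum>\<^sub>\<infinity>x. a (x - y) / total a) = 1"
proof -
  show "\<forall>y. 0 \<le> a y / total a" using a0 Zp by simp
  show "\<forall>y. int R < l1norm y \<longrightarrow> a y / total a = 0" using asup by simp
  have t: "total a = (\<Sum>y\<in>Bl (int R). a y)"
    unfolding total_def using a0 asup by (subst infsum_fin[of "Bl (int R)"]) (auto simp: finite_Bl Bl_def)
  have s: "(\<Sum>\<^sub>\<infinity>x. a x / total a) = 1"
    by (subst infsum_fin[of "Bl (int R)"]) (use asup Zp t in \<open>auto simp: finite_Bl Bl_def sum_divide_distrib[symmetric]\<close>)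
  show "\<forall>y. (\<Sum>\<^sub>\<infinity>x. a (x - y) / total a) = 1"
  proof
    fix y :: "int^'d"
    show "(\<Sum>\<^sub>\<infinity>x. a (x - y) / total a) = 1"
      using infsum_reindex_bij_betw[OF bij_minus_right, of "\<lambda>x. a x / total a" y] s by simp
  qed
qed

lemma rw_facts:
  fixes ab :: "int^'d::finite \<Rightarrow> real"
  assumes a0: "\<forall>y. 0 \<le> ab y" and asup: "\<forall>y. int R < l1norm y \<longrightarrow> ab y = 0"
  shows "(\<forall>x. 0 \<le> rw_dist ab s x) \<and> (\<forall>x. int (s * R) < l1norm x \<longrightarrow> rw_dist ab s x = 0)
     \<and> (\<forall>x. rw_dist ab (Suc s) x = (\<Sum>y\<in>Bl (int (s*R)). rw_dist ab s y * ab (x - y)))"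
proof (induction s)
  case 0
  have "rw_dist ab (Suc 0) x = (\<Sum>y\<in>Bl (int (0*R)). rw_dist ab 0 y * ab (x - y))" for x
    unfolding rw_dist.simps(2)
    by (rule conv_reindex) (auto simp: finite_Bl Bl_def l1norm_nonneg)
  then show ?case by (auto simp: l1norm_nonneg)
next
  case (Suc s)
  then have IH: "\<forall>x. 0 \<le> rw_dist ab s x" "\<forall>x. int (s * R) < l1norm x \<longrightarrow> rw_dist ab s x = 0"
    and rec: "\<forall>x. rw_dist ab (Suc s) x = (\<Sum>y\<in>Bl (int (s*R)). rw_dist ab s y * ab (x - y))" by auto
  have nn: "\<forall>x. 0 \<le> rw_dist ab (Suc s) x" using rec IH a0 by (auto intro!: sum_nonneg)
  have sup: "\<forall>x. int (Suc s * R) < l1norm x \<longrightarrow> rw_dist ab (Suc s) x = 0"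
  proof (intro allI impI)
    fix x :: "int^'d" assume x: "int (Suc s * R) < l1norm x"
    have "rw_dist ab s y * ab (x - y) = 0" if "y \<in> Bl (int (s*R))" for y
    proof -
      have "l1norm x \<le> l1norm y + l1norm (x - y)" using l1norm_add[of y "x - y"] by simp
      moreover have "l1norm y \<le> int (s*R)" using that by (simp add: Bl_def)
      ultimately have "int R < l1norm (x - y)" using x by simp
      then show ?thesis using asup by simp
    qed
    then have "(\<Sum>y\<in>Bl (int (s*R)). rw_dist ab s y * ab (x - y)) = 0"
      by (intro sum.neutral) blast
    then show "rw_dist ab (Suc s) x = 0" using rec by metis
  qed
  have "rw_dist ab (Suc (Suc s)) x = (\<Sum>y\<in>Bl (int (Suc s*R)). rw_dist ab (Suc s) y * ab (x - y))" for x
    unfolding rw_dist.simps(2)[of ab "Suc s"]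
    by (rule conv_reindex) (use sup in \<open>auto simp: finite_Bl Bl_def\<close>)
  then show ?case using nn sup by blast
qed



lemma pointwise:
  fixes p ab :: "int^'d::finite \<Rightarrow> real" and \<Lambda> :: "(int^'d) set"
  assumes p0: "\<forall>x. 0 \<le> p x" and psup: "\<forall>x. x \<notin> F \<longrightarrow> p x = 0" and finF: "finite F"
    and ab0: "\<forall>y. 0 \<le> ab y" and abF: "\<forall>x y. y \<in> F \<longrightarrow> x \<notin> G \<longrightarrow> ab (x - y) = 0"
    and finG: "finite G"
    and ab1: "\<forall>y. (\<Sum>\<^sub>\<infinity>x. ab (x - y)) = 1"
    and K: "0 < K" and h: "0 < h" "h < 1" and fin: "finite \<Lambda>"
  defines "c \<equiv> conv ab (\<lambda>x. if total p > 0 then p x / total p else 0)"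
  defines "n \<equiv> total (\<lambda>x. p x / K)"
  defines "Y \<equiv> (\<Sum>x\<in>G - \<Lambda>. \<Sum>y\<in>F. ab (x - y) * (p y / K))"
  shows "n powr h - 2 * Y powr h \<le> real (card \<Lambda>) * (n powr h * total (\<lambda>x. (c x)\<^sup>2))"
    and "0 \<le> total (\<lambda>x. (c x)\<^sup>2)" "total (\<lambda>x. (c x)\<^sup>2) \<le> 1"
    and "n = (\<Sum>x\<in>F. p x / K)" "0 \<le> Y"
proof -
  define S where "S = (\<Sum>x\<in>F. p x)"
  have S0: "0 \<le> S" unfolding S_def using p0 by (simp add: sum_nonneg)
  have "total p = (\<Sum>x\<in>F. \<bar>p x\<bar>)" unfolding total_def
    by (rule infsum_fin) (use finF psup in auto)
  then have tp: "total p = S" unfolding S_def using p0 by simp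
  have "n = (\<Sum>x\<in>F. \<bar>p x / K\<bar>)" unfolding n_def total_def
    by (rule infsum_fin) (use finF psup in auto)
  then show nF: "n = (\<Sum>x\<in>F. p x / K)" using p0 K by simp
  show Y0: "0 \<le> Y" unfolding Y_def using ab0 p0 K by (intro sum_nonneg mult_nonneg_nonneg) auto
  have "n powr h - 2 * Y powr h \<le> real (card \<Lambda>) * (n powr h * total (\<lambda>x. (c x)\<^sup>2))
     \<and> 0 \<le> total (\<lambda>x. (c x)\<^sup>2) \<and> total (\<lambda>x. (c x)\<^sup>2) \<le> 1"
  proof (cases "S = 0")
    case True
    then have "\<forall>x\<in>F. p x = 0" unfolding S_def using sum_nonneg_eq_0_iff[OF finF] p0 by blast
    then have pz: "\<forall>x. p x = 0" using psup by blast
    have cz: "c x = 0" for x unfolding c_def conv_def using tp True by simp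
    have nz: "n = 0" using nF pz by simp
    have Yz: "Y = 0" unfolding Y_def using pz by simp
    show ?thesis using cz nz Yz by (simp add: total_def)
  next
    case False
    then have Sp: "0 < S" using S0 by simp
    define \<rho> where "\<rho> x = p x / S" for x
    have cF: "c x = (\<Sum>y\<in>F. ab (x - y) * \<rho> y)" for x
      unfolding c_def conv_def using tp Sp
      by (subst infsum_fin[of F]) (use finF psup in \<open>auto simp: \<rho>_def\<close>)
    have c0: "0 \<le> c x" for x unfolding cF \<rho>_def using ab0 p0 Sp by (intro sum_nonneg) auto
    have cG: "c x = 0" if "x \<notin> G" for x unfolding cF using abF that by simp
    have inner: "(\<Sum>x\<in>G. ab (x - y)) = 1" if "y \<in> F" for y
    proof -
      have "(\<Sum>\<^sub>\<infinity>x. ab (x - y)) = (\<Sum>x\<in>G. ab (x - y))"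
        by (rule infsum_fin) (use finG abF that in auto)
      then show ?thesis using ab1 by simp
    qed
    have csum: "(\<Sum>x\<in>G. c x) = 1"
    proof -
      have "(\<Sum>x\<in>G. c x) = (\<Sum>y\<in>F. (\<Sum>x\<in>G. ab (x - y)) * \<rho> y)"
        unfolding cF by (subst sum.swap) (simp add: sum_distrib_right)
      also have "\<dots> = (\<Sum>y\<in>F. \<rho> y)" using inner by simp
      also have "\<dots> = 1" unfolding \<rho>_def using Sp by (simp add: sum_divide_distrib[symmetric] S_def)
      finally show ?thesis .
    qed
    have c1: "c x \<le> 1" for x
    proof (cases "x \<in> G")
      case True
      then have "c x \<le> (\<Sum>x\<in>G. c x)" using finG c0 by (intro member_le_sum) auto
      then show ?thesis using csum by simp
    qed (use cG in simp)
    have "total (\<lambda>x. (c x)\<^sup>2) = (\<Sum>x\<in>G. \<bar>(c x)\<^sup>2\<bar>)" unfolding total_def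
      by (rule infsum_fin) (use finG cG in auto)
    then have tc: "total (\<lambda>x. (c x)\<^sup>2) = (\<Sum>x\<in>G. (c x)\<^sup>2)" by simp
    have csq: "(c x)\<^sup>2 \<le> c x" for x using c0[of x] c1[of x]
      by (simp add: power2_eq_square mult_left_le_one_le)
    have tc1: "(\<Sum>x\<in>G. (c x)\<^sup>2) \<le> 1" using csum csq by (metis sum_mono)
    have tc0: "0 \<le> (\<Sum>x\<in>G. (c x)\<^sup>2)" by (simp add: sum_nonneg)
    define q where "q = (\<Sum>x\<in>G - \<Lambda>. c x)"
    define pl where "pl = (\<Sum>x\<in>G \<inter> \<Lambda>. c x)"
    have plq: "pl + q = 1" unfolding pl_def q_def using csum sum.Int_Diff[OF finG, of c \<Lambda>] by simp
    have q0: "0 \<le> q" unfolding q_def using c0 by (simp add: sum_nonneg)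
    have pl0: "0 \<le> pl" unfolding pl_def using c0 by (simp add: sum_nonneg)
    have "pl\<^sup>2 \<le> (\<Sum>x\<in>G \<inter> \<Lambda>. (c x)\<^sup>2) * card (G \<inter> \<Lambda>)"
      unfolding pl_def by (rule sum_squared_le_sum_of_squares)
    also have "\<dots> \<le> (\<Sum>x\<in>G. (c x)\<^sup>2) * card \<Lambda>"
      by (intro mult_mono sum_mono2 finG) (auto simp: fin card_mono tc0)
    finally have CS: "pl\<^sup>2 \<le> (\<Sum>x\<in>G. (c x)\<^sup>2) * card \<Lambda>" .
    have "0 \<le> (pl - 1)\<^sup>2" by simp
    then have "pl\<^sup>2 \<ge> 2 * pl - 1" by (simp add: power2_diff)
    then have key: "1 - 2 * q \<le> real (card \<Lambda>) * (\<Sum>x\<in>G. (c x)\<^sup>2)" using CS plq by (simp add: mult.commute)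
    have nq: "Y = n * q"
    proof -
      have cn: "c x * n = (\<Sum>y\<in>F. ab (x - y) * (p y / K))" for x
        unfolding cF nF \<rho>_def using Sp K
        by (simp add: sum_distrib_right S_def[symmetric] sum_divide_distrib[symmetric] field_simps)
      have "Y = (\<Sum>x\<in>G - \<Lambda>. c x * n)" unfolding Y_def using cn by simp
      also have "\<dots> = n * q" unfolding q_def by (simp add: sum_distrib_left mult.commute)
      finally show ?thesis .
    qed
    have q1: "q \<le> 1" using plq pl0 by simp
    have qh: "q \<le> q powr h"
      using powr_mono'[of h 1 q] q0 q1 h by (cases "q = 0") auto
    have n0: "0 \<le> n" unfolding nF using p0 K by (simp add: sum_nonneg)
    have N0: "0 \<le> n powr h" by simp
    have "n powr h - 2 * Y powr h = n powr h - 2 * (n powr h * q powr h)"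
      unfolding nq by (simp add: powr_mult)
    also have "\<dots> \<le> n powr h - 2 * (n powr h * q)" using qh N0 by (simp add: mult_left_mono)
    also have "\<dots> = n powr h * (1 - 2 * q)" by (simp add: algebra_simps)
    also have "\<dots> \<le> n powr h * (real (card \<Lambda>) * (\<Sum>x\<in>G. (c x)\<^sup>2))"
      using key N0 by (rule mult_left_mono)
    finally show ?thesis using tc tc0 tc1 by (simp add: algebra_simps)
  qed
  then show "n powr h - 2 * Y powr h \<le> real (card \<Lambda>) * (n powr h * total (\<lambda>x. (c x)\<^sup>2))"
    and "0 \<le> total (\<lambda>x. (c x)\<^sup>2)" "total (\<lambda>x. (c x)\<^sup>2) \<le> 1" by auto
qed



lemma powr_le_lin:
  fixes u h :: real
  assumes "0 \<le> u" "0 < h" "h < 1"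
  shows "u powr h \<le> (1 - h) + h * u"
proof (cases "u = 0")
  case True then show ?thesis using assms by simp
next
  case False
  then have "u powr h * 1 powr (1 - h) \<le> h * u + (1 - h) * 1"
    using assms by (intro Youngs_inequality_0) auto
  then show ?thesis by simp
qed

lemma powr_le_1plus:
  fixes u h :: real
  assumes "0 \<le> u" "0 < h" "h < 1"
  shows "u powr h \<le> 1 + u"
  using powr_le_lin[OF assms] assms by (smt (verit) mult_left_le_one_le)

lemma (in prob_space) powr_jensen:
  fixes Y :: "'a \<Rightarrow> real"
  assumes Y: "integrable M Y" and nn: "AE \<omega> in M. 0 \<le> Y \<omega>" and h: "0 < h" "h < 1"
  shows "integrable M (\<lambda>\<omega>. Y \<omega> powr h)"
    and "(\<integral>\<omega>. Y \<omega> powr h \<partial>M) \<le> (\<integral>\<omega>. Y \<omega> \<partial>M) powr h"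
proof -
  have Ym[measurable]: "Y \<in> borel_measurable M" using Y by auto
  show I: "integrable M (\<lambda>\<omega>. Y \<omega> powr h)"
  proof (rule Bochner_Integration.integrable_bound[of _ "\<lambda>\<omega>. 1 + Y \<omega>"])
    show "integrable M (\<lambda>\<omega>. 1 + Y \<omega>)" using Y by simp
    show "(\<lambda>\<omega>. Y \<omega> powr h) \<in> borel_measurable M" by measurable
    show "AE \<omega> in M. norm (Y \<omega> powr h) \<le> norm (1 + Y \<omega>)"
      using nn by eventually_elim (use powr_le_1plus h in auto)
  qed
  define m where "m = (\<integral>\<omega>. Y \<omega> \<partial>M)"
  have m0: "0 \<le> m" unfolding m_def using nn by (rule integral_nonneg_AE)
  show "(\<integral>\<omega>. Y \<omega> powr h \<partial>M) \<le> (\<integral>\<omega>. Y \<omega> \<partial>M) powr h"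
  proof (cases "m = 0")
    case True
    then have "AE \<omega> in M. Y \<omega> = 0"
      using integral_nonneg_eq_0_iff_AE[OF Y nn] unfolding m_def by simp
    then have "AE \<omega> in M. Y \<omega> powr h = 0" by eventually_elim simp
    then have "(\<integral>\<omega>. Y \<omega> powr h \<partial>M) = 0" by (rule integral_eq_zero_AE)
    then show ?thesis by simp
  next
    case False
    then have mp: "0 < m" using m0 by simp
    have "AE \<omega> in M. Y \<omega> powr h \<le> m powr h * ((1 - h) + h * (Y \<omega> / m))"
      using nn
    proof eventually_elim
      case (elim \<omega>)
      have "Y \<omega> powr h = m powr h * (Y \<omega> / m) powr h"
        using mp elim by (simp add: powr_divide)
      also have "\<dots> \<le> m powr h * ((1 - h) + h * (Y \<omega> / m))"
        using powr_le_lin[of "Y \<omega> / m" h] elim mp h by (intro mult_left_mono) auto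
      finally show ?case .
    qed
    then have "(\<integral>\<omega>. Y \<omega> powr h \<partial>M) \<le> (\<integral>\<omega>. m powr h * ((1 - h) + h * (Y \<omega> / m)) \<partial>M)"
      by (intro integral_mono_AE I) (use Y in simp)
    also have "\<dots> = m powr h * ((1 - h) + h * (m / m))"
      using Y unfolding m_def by (simp add: prob_space)
    also have "\<dots> = m powr h" using mp by simp
    finally show ?thesis unfolding m_def .
  qed
qed



declare measurable_infsum_countable[measurable (raw)]

lemma popN_meas:
  fixes A :: "nat \<Rightarrow> 'w \<Rightarrow> int ^ 'd::finite \<Rightarrow> int ^ 'd \<Rightarrow> real"
  assumes "\<And>i x y. i \<in> {1..s} \<Longrightarrow> (\<lambda>\<omega>. A i \<omega> x y) \<in> borel_measurable N"
  shows "(\<lambda>\<omega>. popN A s \<omega> x) \<in> borel_measurable N"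
  using assms
proof (induction s arbitrary: x)
  case 0
  show ?case by simp
next
  case (Suc s)
  have IH: "(\<lambda>\<omega>. popN A s \<omega> x) \<in> borel_measurable N" for x using Suc by auto
  have Am: "(\<lambda>\<omega>. A (Suc s) \<omega> x y) \<in> borel_measurable N" for x y using Suc.prems by auto
  show ?case unfolding popN.simps
    by (intro measurable_infsum_countable borel_measurable_times IH Am)
qed

lemma popN_cong:
  fixes A :: "nat \<Rightarrow> 'w \<Rightarrow> int ^ 'd::finite \<Rightarrow> int ^ 'd \<Rightarrow> real"
    and A' :: "nat \<Rightarrow> 'v \<Rightarrow> int ^ 'd::finite \<Rightarrow> int ^ 'd \<Rightarrow> real"
  assumes "\<And>i x y. i \<in> {1..s} \<Longrightarrow> A i \<omega> x y = A' i \<omega>' x y"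
  shows "popN A s \<omega> x = popN A' s \<omega>' x"
  using assms
proof (induction s arbitrary: x)
  case 0
  show ?case by simp
next
  case (Suc s)
  have IH: "popN A s \<omega> x = popN A' s \<omega>' x" for x using Suc by auto
  have Am: "A (Suc s) \<omega> x y = A' (Suc s) \<omega>' x y" for x y using Suc.prems by auto
  show ?case by (simp add: IH Am)
qed

lemma abs_le_1_sq: "\<bar>a::real\<bar> \<le> 1 + a\<^sup>2"
proof (cases "\<bar>a\<bar> \<le> 1")
  case True then show ?thesis by (smt (verit) zero_le_power2)
next
  case False
  then have "\<bar>a\<bar> * 1 \<le> \<bar>a\<bar> * \<bar>a\<bar>" by (intro mult_left_mono) auto
  then show ?thesis by (simp add: power2_eq_square abs_mult_self_eq)
qed



theorem lemma3p4:
  fixes M :: "'w measure"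
    and A :: "nat \<Rightarrow> 'w \<Rightarrow> int ^ 'd::finite \<Rightarrow> int ^ 'd \<Rightarrow> real"
    and rA :: nat and h :: real and \<Lambda> :: "(int ^ 'd) set" and t :: nat
  assumes P: "prob_space M"
    and iid_indep: "prob_space.indep_vars M (\<lambda>_. PiM UNIV (\<lambda>_. borel))
                      (\<lambda>s \<omega> (x, y). A s \<omega> x y) {1..}"
    and iid_distr: "\<forall>s\<ge>1. distr M (PiM UNIV (\<lambda>_. borel)) (\<lambda>\<omega> (x, y). A s \<omega> x y)
                           = distr M (PiM UNIV (\<lambda>_. borel)) (\<lambda>\<omega> (x, y). A 1 \<omega> x y)"
    and nonneg: "\<forall>\<omega>\<in>space M. \<forall>x y. A 1 \<omega> x y \<ge> 0"
    and col_indep: "prob_space.indep_vars M (\<lambda>_. PiM UNIV (\<lambda>_. borel))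
                      (\<lambda>y \<omega> x. A 1 \<omega> x y) UNIV"
    and sq_int: "\<forall>x y. integrable M (\<lambda>\<omega>. (A 1 \<omega> x y)\<^sup>2)"
    and range: "\<forall>x y. l1norm (x - y) > int rA \<longrightarrow> (AE \<omega> in M. A 1 \<omega> x y = 0)"
    and shift: "\<forall>z. distr M (PiM UNIV (\<lambda>_. borel)) (\<lambda>\<omega> (x, y). A 1 \<omega> (x + z) (y + z))
                    = distr M (PiM UNIV (\<lambda>_. borel)) (\<lambda>\<omega> (x, y). A 1 \<omega> x y)"
    and basis: "\<exists>B \<subseteq> to_real_vec ` {x. (\<Sum>\<^sub>\<infinity>y. meanA M A (x + y) * meanA M A y) \<noteq> 0}.
                   independent B \<and> span B = UNIV"
    and h: "0 < h" "h < 1"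
    and fin: "finite \<Lambda>"
    and t: "t \<ge> 1"
  shows "real (card \<Lambda>) *
           (\<integral>\<omega>. total (Nbar M A (t - 1) \<omega>) powr h
                 * total (\<lambda>x. (conv (abar M A) (rho A (t - 1) \<omega>) x)\<^sup>2) \<partial>M)
         \<ge> (\<integral>\<omega>. total (Nbar M A (t - 1) \<omega>) powr h \<partial>M)
           - 2 * (\<Sum>\<^sub>\<infinity>x\<in>- \<Lambda>. rw_dist (abar M A) t x) powr h"
proof -
  interpret prob_space M by (rule P)
  define D where "D = (PiM UNIV (\<lambda>_. borel) :: (((int^'d) \<times> (int^'d)) \<Rightarrow> real) measure)"
  define X where "X = (\<lambda>s \<omega>. \<lambda>(x::int^'d, y::int^'d). A s \<omega> x y)"
  have iid': "indep_vars (\<lambda>_. D) X {1..}" using iid_indep unfolding D_def X_def .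
  have Xm: "X s \<in> measurable M D" if "1 \<le> s" for s
    using conjunct1[OF iid'[unfolded indep_vars_def]] that by simp
  have evD[measurable]: "(\<lambda>F. F (x,y)) \<in> borel_measurable D" for x y
    unfolding D_def by (rule measurable_component_singleton) simp
  have XA: "X s \<omega> (x,y) = A s \<omega> x y" for s \<omega> x y unfolding X_def by simp
  have Am[measurable]: "(\<lambda>\<omega>. A s \<omega> x y) \<in> borel_measurable M" if "1 \<le> s" for s x y
    using measurable_compose[OF Xm[OF that] evD[of x y]] by (simp only: XA)
  have deq: "distr M D (X s) = distr M D (X 1)" if "1 \<le> s" for s
    unfolding D_def X_def by (rule iid_distr[rule_format, OF that])
  have int_tr: "integral\<^sup>L M (\<lambda>\<omega>. g (X s \<omega>)) = integral\<^sup>L M (\<lambda>\<omega>. g (X 1 \<omega>))"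
    if "1 \<le> s" "g \<in> borel_measurable D" for s and g :: "_ \<Rightarrow> real"
    using integral_distr[OF Xm[OF that(1)] that(2)] integral_distr[OF Xm[OF order_refl] that(2)] deq[OF that(1)]
    by simp
  have intg_tr: "integrable M (\<lambda>\<omega>. g (X s \<omega>)) \<longleftrightarrow> integrable M (\<lambda>\<omega>. g (X 1 \<omega>))"
    if "1 \<le> s" "g \<in> borel_measurable D" for s and g :: "_ \<Rightarrow> real"
    using integrable_distr_eq[OF Xm[OF that(1)] that(2)] integrable_distr_eq[OF Xm[OF order_refl] that(2)] deq[OF that(1)]
    by simp
  have AE_tr: "(AE \<omega> in M. Q (X s \<omega>)) \<longleftrightarrow> (AE \<omega> in M. Q (X 1 \<omega>))"
    if "1 \<le> s" "{F \<in> space D. Q F} \<in> sets D" for s Q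
  proof -
    have "(AE \<omega> in M. Q (X s \<omega>)) = (AE x in distr M D (X s). Q x)"
      by (rule AE_distr_iff[OF Xm[OF that(1)] that(2), symmetric])
    also have "\<dots> = (AE x in distr M D (X 1). Q x)" by (simp only: deq[OF that(1)])
    also have "\<dots> = (AE \<omega> in M. Q (X 1 \<omega>))" by (rule AE_distr_iff[OF Xm[OF order_refl] that(2)])
    finally show ?thesis .
  qed
  have int1: "integrable M (\<lambda>\<omega>. A 1 \<omega> x y)" for x y
  proof (rule Bochner_Integration.integrable_bound[of _ "\<lambda>\<omega>. 1 + (A 1 \<omega> x y)\<^sup>2"])
    show "integrable M (\<lambda>\<omega>. 1 + (A 1 \<omega> x y)\<^sup>2)" using sq_int by simp
    show "(\<lambda>\<omega>. A 1 \<omega> x y) \<in> borel_measurable M" by simp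
    show "AE \<omega> in M. norm (A 1 \<omega> x y) \<le> norm (1 + (A 1 \<omega> x y)\<^sup>2)"
      using abs_le_1_sq by (simp add: add_nonneg_nonneg)
  qed
  have nnA: "AE \<omega> in M. 0 \<le> A s \<omega> x y" if "1 \<le> s" for s x y
  proof -
    have "AE \<omega> in M. 0 \<le> X 1 \<omega> (x,y)" using nonneg by (simp add: XA)
    then have "AE \<omega> in M. 0 \<le> X s \<omega> (x,y)" using AE_tr[OF that, of "\<lambda>F. 0 \<le> F (x,y)"] by simp
    then show ?thesis by (simp add: XA)
  qed
  have supA: "AE \<omega> in M. A s \<omega> x y = 0" if "1 \<le> s" "int rA < l1norm (x - y)" for s x y
  proof -
    have "AE \<omega> in M. X 1 \<omega> (x,y) = 0" using range that(2) by (simp add: XA)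
    then have "AE \<omega> in M. X s \<omega> (x,y) = 0" using AE_tr[OF that(1), of "\<lambda>F. F (x,y) = 0"] by simp
    then show ?thesis by (simp add: XA)
  qed
  define a where "a = meanA M A"
  have intA: "integrable M (\<lambda>\<omega>. A s \<omega> x y)" if "1 \<le> s" for s x y
    using intg_tr[OF that evD[of x y]] int1[of x y] by (simp add: XA)
  have shift_int: "(\<integral>\<omega>. A 1 \<omega> x y \<partial>M) = a (y - x)" for x y
  proof -
    define Z' where "Z' = (\<lambda>\<omega>. \<lambda>(u::int^'d, v::int^'d). A 1 \<omega> (u + x) (v + x))"
    have Z'm: "Z' \<in> measurable M D" unfolding D_def
    proof (rule measurable_PiM_single'[where f = "\<lambda>i \<omega>. Z' \<omega> i", simplified])
      fix i :: "(int^'d) \<times> (int^'d)"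
      obtain u v where i: "i = (u, v)" by (cases i)
      show "(\<lambda>\<omega>. Z' \<omega> i) \<in> borel_measurable M" unfolding Z'_def i by simp
    qed (auto simp: PiE_def extensional_def)
    have "distr M D Z' = distr M D (X 1)" unfolding D_def X_def Z'_def by (rule shift[rule_format])
    then have "(\<integral>\<omega>. Z' \<omega> (0, y - x) \<partial>M) = (\<integral>\<omega>. X 1 \<omega> (0, y - x) \<partial>M)"
      using integral_distr[OF Z'm evD[of 0 "y - x"]] integral_distr[OF Xm[OF order_refl] evD[of 0 "y - x"]] by simp
    then show ?thesis unfolding Z'_def a_def meanA_def by (simp add: XA)
  qed
  have EA: "(\<integral>\<omega>. A s \<omega> x y \<partial>M) = a (y - x)" if "1 \<le> s" for s x y
    using int_tr[OF that evD[of x y]] shift_int[of x y] by (simp add: XA)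
  have a0: "\<forall>y. 0 \<le> a y" unfolding a_def meanA_def using nonneg by (auto intro: integral_nonneg)
  have asup: "\<forall>y. int rA < l1norm y \<longrightarrow> a y = 0"
  proof (intro allI impI)
    fix y :: "int^'d" assume "int rA < l1norm y"
    then have "int rA < l1norm (0 - y)" using l1norm_minus[of y] by simp
    then show "a y = 0" unfolding a_def meanA_def using range by (auto intro: integral_eq_zero_AE)
  qed
  define Z where "Z = total a"
  have Zp: "0 < Z"
  proof (rule ccontr)
    assume "\<not> 0 < Z"
    moreover have "0 \<le> Z" unfolding Z_def total_def by (rule infsum_nonneg) auto
    ultimately have Z0: "Z = 0" by simp
    have "Z = (\<Sum>y\<in>Bl (int rA). \<bar>a y\<bar>)" unfolding Z_def total_def
      by (rule infsum_fin) (use asup in \<open>auto simp: finite_Bl Bl_def\<close>)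
    then have "(\<Sum>y\<in>Bl (int rA). \<bar>a y\<bar>) = 0" using Z0 by simp
    then have az0: "\<forall>y\<in>Bl (int rA). \<bar>a y\<bar> = 0"
      by (subst (asm) sum_nonneg_eq_0_iff) (auto simp: finite_Bl)
    have az: "a y = 0" for y
    proof (cases "l1norm y \<le> int rA")
      case True then show ?thesis using az0 by (simp add: Bl_def)
    next
      case False then show ?thesis using asup by simp
    qed
    obtain B where B: "B \<subseteq> to_real_vec ` {x. (\<Sum>\<^sub>\<infinity>y. meanA M A (x + y) * meanA M A y) \<noteq> 0}"
      "span B = UNIV" using basis by blast
    then have "B = {}" using az unfolding a_def by auto
    then have "(UNIV :: (real^'d) set) = {0}" using B(2) by simp
    then have "(1::real^'d) = 0" by blast
    then show False by simp
  qed
  define ab where "ab = (\<lambda>y. a y / Z)"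
  have abeq: "abar M A = ab" unfolding ab_def abar_def a_def Z_def by auto
  have abf: "\<forall>y. 0 \<le> ab y" "\<forall>y. int rA < l1norm y \<longrightarrow> ab y = 0" "\<forall>y. (\<Sum>\<^sub>\<infinity>x. ab (x - y)) = 1"
    using ab_facts[OF a0 asup Zp[unfolded Z_def]] unfolding ab_def Z_def by auto
  have rwf: "(\<forall>x. 0 \<le> rw_dist ab s x) \<and> (\<forall>x. int (s * rA) < l1norm x \<longrightarrow> rw_dist ab s x = 0)
     \<and> (\<forall>x. rw_dist ab (Suc s) x = (\<Sum>y\<in>Bl (int (s*rA)). rw_dist ab s y * ab (x - y)))" for s
    by (rule rw_facts[OF abf(1,2)])
  define G where "G \<omega> = (\<forall>s\<in>{1..t}. \<forall>x y. 0 \<le> A s \<omega> x y \<and> (int rA < l1norm (x - y) \<longrightarrow> A s \<omega> x y = 0))" for \<omega>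
  have AEG: "AE \<omega> in M. G \<omega>"
    unfolding G_def
  proof (rule AE_ball_countable'[OF _ countable_finite[OF finite_atLeastAtMost]])
    fix s assume s: "s \<in> {1..t}"
    show "AE \<omega> in M. \<forall>x y. 0 \<le> A s \<omega> x y \<and> (int rA < l1norm (x - y) \<longrightarrow> A s \<omega> x y = 0)"
      unfolding AE_all_countable
    proof (intro allI)
      fix x y :: "int^'d"
      show "AE \<omega> in M. 0 \<le> A s \<omega> x y \<and> (int rA < l1norm (x - y) \<longrightarrow> A s \<omega> x y = 0)"
      proof (cases "int rA < l1norm (x - y)")
        case True
        have "AE \<omega> in M. 0 \<le> A s \<omega> x y" "AE \<omega> in M. A s \<omega> x y = 0"
          using nnA supA s True by auto
        then show ?thesis by eventually_elim auto
      next
        case False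
        have "AE \<omega> in M. 0 \<le> A s \<omega> x y" using nnA s by auto
        then show ?thesis by eventually_elim (use False in auto)
      qed
    qed
  qed
  have det: "(\<forall>x. 0 \<le> popN A s \<omega> x) \<and> (\<forall>x. int (s*rA) < l1norm x \<longrightarrow> popN A s \<omega> x = 0)
      \<and> (s < t \<longrightarrow> (\<forall>y. popN A (Suc s) \<omega> y = (\<Sum>x\<in>Bl (int (s*rA)). popN A s \<omega> x * A (Suc s) \<omega> x y)))"
    if "G \<omega>" "s \<le> t" for \<omega> s
    using popN_det[of t A \<omega> rA s] that unfolding G_def by blast
  have popm[measurable]: "(\<lambda>\<omega>. popN A s \<omega> x) \<in> borel_measurable M" for s x
    by (rule popN_meas) auto
  have indep: "indep_var borel (\<lambda>\<omega>. popN A s \<omega> x) borel (\<lambda>\<omega>. A (Suc s) \<omega> x' y)" for s x x' y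
  proof -
    have ind: "indep_var (PiM {1..s} (\<lambda>_. D)) (\<lambda>\<omega>. restrict (\<lambda>i. X i \<omega>) {1..s})
                 (PiM {Suc s} (\<lambda>_. D)) (\<lambda>\<omega>. restrict (\<lambda>i. X i \<omega>) {Suc s})"
      by (rule indep_var_restrict[OF iid']) auto
    define Y1 where "Y1 = (\<lambda>F. popN (\<lambda>i F x y. F i (x,y)) s F x)"
    define Y2 where "Y2 = (\<lambda>F. F (Suc s) (x', y) :: real)"
    have Y1m: "Y1 \<in> borel_measurable (PiM {1..s} (\<lambda>_. D))" unfolding Y1_def
    proof (rule popN_meas)
      fix i x y assume i: "i \<in> {1..s}"
      show "(\<lambda>F. F i (x, y)) \<in> borel_measurable (PiM {1..s} (\<lambda>_. D))"
        using measurable_compose[OF measurable_component_singleton[of i "{1..s}" "\<lambda>_. D"] evD[of x y]] i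
        by simp
    qed
    have Y2m: "Y2 \<in> borel_measurable (PiM {Suc s} (\<lambda>_. D))" unfolding Y2_def
      using measurable_compose[OF measurable_component_singleton[of "Suc s" "{Suc s}" "\<lambda>_. D"] evD[of x' y]]
      by simp
    have "indep_var borel (Y1 \<circ> (\<lambda>\<omega>. restrict (\<lambda>i. X i \<omega>) {1..s})) borel (Y2 \<circ> (\<lambda>\<omega>. restrict (\<lambda>i. X i \<omega>) {Suc s}))"
      by (rule indep_var_compose[OF ind Y1m Y2m])
    moreover have "Y1 \<circ> (\<lambda>\<omega>. restrict (\<lambda>i. X i \<omega>) {1..s}) = (\<lambda>\<omega>. popN A s \<omega> x)"
      unfolding Y1_def comp_def
      by (intro ext popN_cong) (simp add: XA)
    moreover have "Y2 \<circ> (\<lambda>\<omega>. restrict (\<lambda>i. X i \<omega>) {Suc s}) = (\<lambda>\<omega>. A (Suc s) \<omega> x' y)"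
      unfolding Y2_def comp_def by (simp add: XA)
    ultimately show ?thesis by simp
  qed
  define T where "T = t - 1"
  have tT: "t = Suc T" unfolding T_def using t by simp
  have EP: "\<forall>x. integrable M (\<lambda>\<omega>. popN A s \<omega> x) \<and> (\<integral>\<omega>. popN A s \<omega> x \<partial>M) = Z ^ s * rw_dist ab s x"
    if "s \<le> T" for s
    using that
  proof (induction s)
    case 0
    show ?case by (auto simp: prob_space)
  next
    case (Suc s)
    then have IH: "integrable M (\<lambda>\<omega>. popN A s \<omega> x)" "(\<integral>\<omega>. popN A s \<omega> x \<partial>M) = Z ^ s * rw_dist ab s x" for x
      by auto
    have st: "s < t" using Suc.prems tT by simp
    show ?case
    proof
      fix y
      have ae: "AE \<omega> in M. popN A (Suc s) \<omega> y = (\<Sum>x\<in>Bl (int (s*rA)). popN A s \<omega> x * A (Suc s) \<omega> x y)"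
        using AEG by eventually_elim (use det st in auto)
      have ip: "integrable M (\<lambda>\<omega>. popN A s \<omega> x * A (Suc s) \<omega> x y)" for x
        by (rule indep_var_integrable[OF indep IH(1) intA]) simp
      have ep: "(\<integral>\<omega>. popN A s \<omega> x * A (Suc s) \<omega> x y \<partial>M) = Z ^ s * rw_dist ab s x * a (y - x)" for x
        using indep_var_lebesgue_integral[OF indep IH(1) intA[of "Suc s"]] IH(2) EA[of "Suc s"] by simp
      have m2: "(\<lambda>\<omega>. \<Sum>x\<in>Bl (int (s*rA)). popN A s \<omega> x * A (Suc s) \<omega> x y) \<in> borel_measurable M"
        by measurable
      have int2: "integrable M (\<lambda>\<omega>. \<Sum>x\<in>Bl (int (s*rA)). popN A s \<omega> x * A (Suc s) \<omega> x y)"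
        by (rule Bochner_Integration.integrable_sum) (rule ip)
      have i1: "integrable M (\<lambda>\<omega>. popN A (Suc s) \<omega> y)"
        using integrable_cong_AE[OF popm m2 ae] int2 by simp
      have rws: "rw_dist ab (Suc s) y = (\<Sum>x\<in>Bl (int (s*rA)). rw_dist ab s x * ab (y - x))"
        using rwf[of s] by blast
      have "(\<integral>\<omega>. popN A (Suc s) \<omega> y \<partial>M) = (\<integral>\<omega>. (\<Sum>x\<in>Bl (int (s*rA)). popN A s \<omega> x * A (Suc s) \<omega> x y) \<partial>M)"
        by (rule integral_cong_AE[OF popm m2 ae])
      also have "\<dots> = (\<Sum>x\<in>Bl (int (s*rA)). (\<integral>\<omega>. popN A s \<omega> x * A (Suc s) \<omega> x y \<partial>M))"
        by (rule Bochner_Integration.integral_sum) (use ip in auto)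
      also have "\<dots> = (\<Sum>x\<in>Bl (int (s*rA)). Z ^ s * rw_dist ab s x * a (y - x))"
        using ep by simp
      also have "\<dots> = Z ^ Suc s * rw_dist ab (Suc s) y"
        unfolding rws using Zp unfolding ab_def by (simp add: sum_distrib_left field_simps)
      finally show "integrable M (\<lambda>\<omega>. popN A (Suc s) \<omega> y) \<and>
           (\<integral>\<omega>. popN A (Suc s) \<omega> y \<partial>M) = Z ^ Suc s * rw_dist ab (Suc s) y"
        using i1 by simp
    qed
  qed
  have EPT: "integrable M (\<lambda>\<omega>. popN A T \<omega> x)" "(\<integral>\<omega>. popN A T \<omega> x \<partial>M) = Z ^ T * rw_dist ab T x" for x
    using EP[of T] by auto
  define BT where "BT = (Bl (int (T*rA)) :: (int^'d) set)"
  define Bt where "Bt = (Bl (int (t*rA)) :: (int^'d) set)"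
  have finB: "finite BT" "finite Bt" unfolding BT_def Bt_def by (auto simp: finite_Bl)
  define Y where "Y \<omega> = (\<Sum>x\<in>Bt - \<Lambda>. \<Sum>y\<in>BT. ab (x - y) * (popN A T \<omega> y / Z^T))" for \<omega>
  define f1 where "f1 \<omega> = total (Nbar M A T \<omega>) powr h" for \<omega>
  define tc where "tc \<omega> = total (\<lambda>x. (conv ab (rho A T \<omega>) x)\<^sup>2)" for \<omega>
  define nfin where "nfin \<omega> = (\<Sum>x\<in>BT. popN A T \<omega> x / Z^T)" for \<omega>
  have abF: "\<forall>x y. y \<in> BT \<longrightarrow> x \<notin> Bt \<longrightarrow> ab (x - y) = 0"
  proof (intro allI impI)
    fix x y :: "int^'d" assume y: "y \<in> BT" and x: "x \<notin> Bt"
    have "l1norm x \<le> l1norm y + l1norm (x - y)" using l1norm_add[of y "x - y"] by simp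
    moreover have "l1norm y \<le> int (T*rA)" using y by (simp add: BT_def Bl_def)
    moreover have "int (t*rA) < l1norm x" using x by (simp add: Bt_def Bl_def)
    ultimately have "int rA < l1norm (x - y)" using tT by simp
    then show "ab (x - y) = 0" using abf(2) by simp
  qed
  have pw: "AE \<omega> in M. f1 \<omega> - 2 * Y \<omega> powr h \<le> real (card \<Lambda>) * (f1 \<omega> * tc \<omega>)
     \<and> 0 \<le> tc \<omega> \<and> tc \<omega> \<le> 1 \<and> total (Nbar M A T \<omega>) = nfin \<omega> \<and> 0 \<le> Y \<omega>"
    using AEG
  proof eventually_elim
    case (elim \<omega>)
    have dT: "\<forall>x. 0 \<le> popN A T \<omega> x" "\<forall>x. x \<notin> BT \<longrightarrow> popN A T \<omega> x = 0"
      using det[OF elim, of T] tT by (auto simp: BT_def Bl_def)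
    have Nb: "Nbar M A T \<omega> = (\<lambda>x. popN A T \<omega> x / Z^T)" unfolding Nbar_def Z_def a_def by auto
    have rh: "rho A T \<omega> = (\<lambda>x. if total (popN A T \<omega>) > 0 then popN A T \<omega> x / total (popN A T \<omega>) else 0)"
      unfolding rho_def by auto
    note pt = pointwise[of "popN A T \<omega>" BT ab Bt "Z^T" h \<Lambda>, OF dT finB(1) abf(1) abF finB(2) abf(3) _ h fin]
    show ?case using pt Zp unfolding f1_def tc_def Y_def nfin_def Nb rh by auto
  qed
  have Nbm[measurable]: "(\<lambda>\<omega>. total (Nbar M A T \<omega>)) \<in> borel_measurable M"
    unfolding total_def Nbar_def by measurable
  have f1m[measurable]: "f1 \<in> borel_measurable M" unfolding f1_def by measurable
  have tpm[measurable]: "(\<lambda>\<omega>. total (popN A T \<omega>)) \<in> borel_measurable M"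
    unfolding total_def by measurable
  have rhom[measurable]: "(\<lambda>\<omega>. rho A T \<omega> x) \<in> borel_measurable M" for x
    unfolding rho_def by measurable
  have convm[measurable]: "(\<lambda>\<omega>. conv ab (rho A T \<omega>) x) \<in> borel_measurable M" for x
    unfolding conv_def by measurable
  have tcm[measurable]: "tc \<in> borel_measurable M" unfolding tc_def total_def by measurable
  have Ym[measurable]: "Y \<in> borel_measurable M" unfolding Y_def by measurable
  have nfin_int: "integrable M nfin" unfolding nfin_def
    by (rule Bochner_Integration.integrable_sum) (use EPT(1) in simp)
  have f1_int: "integrable M f1"
  proof (rule Bochner_Integration.integrable_bound[of _ "\<lambda>\<omega>. 1 + nfin \<omega>"])
    show "integrable M (\<lambda>\<omega>. 1 + nfin \<omega>)" using nfin_int by simp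
    show "f1 \<in> borel_measurable M" by simp
    show "AE \<omega> in M. norm (f1 \<omega>) \<le> norm (1 + nfin \<omega>)"
      using pw
    proof eventually_elim
      case (elim \<omega>)
      have t0: "0 \<le> total (Nbar M A T \<omega>)" unfolding total_def by (rule infsum_nonneg) auto
      then have "f1 \<omega> \<le> 1 + nfin \<omega>" using elim powr_le_1plus[OF t0 h] unfolding f1_def by simp
      then show ?case using t0 unfolding f1_def by simp
    qed
  qed
  have f2_int: "integrable M (\<lambda>\<omega>. real (card \<Lambda>) * (f1 \<omega> * tc \<omega>))"
  proof -
    have "integrable M (\<lambda>\<omega>. f1 \<omega> * tc \<omega>)"
    proof (rule Bochner_Integration.integrable_bound[OF f1_int])
      show "(\<lambda>\<omega>. f1 \<omega> * tc \<omega>) \<in> borel_measurable M" by measurable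
      show "AE \<omega> in M. norm (f1 \<omega> * tc \<omega>) \<le> norm (f1 \<omega>)"
        using pw
      proof eventually_elim
        case (elim \<omega>)
        have "0 \<le> f1 \<omega>" unfolding f1_def by simp
        then show ?case using elim by (simp add: abs_mult mult_left_le)
      qed
    qed
    then show ?thesis by simp
  qed
  have i_in: "integrable M (\<lambda>\<omega>. ab (x - y) * (popN A T \<omega> y / Z^T))" for x y
    using EPT(1)[of y] by simp
  have i_out: "integrable M (\<lambda>\<omega>. \<Sum>y\<in>BT. ab (x - y) * (popN A T \<omega> y / Z^T))" for x
    by (rule Bochner_Integration.integrable_sum) (rule i_in)
  have Y_int: "integrable M Y" unfolding Y_def
    by (rule Bochner_Integration.integrable_sum) (rule i_out)
  have Y0: "AE \<omega> in M. 0 \<le> Y \<omega>" using pw by eventually_elim auto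
  have rwt: "rw_dist ab t x = (\<Sum>y\<in>BT. rw_dist ab T y * ab (x - y))" for x
    using rwf[of T] unfolding tT BT_def by blast
  have "(\<integral>\<omega>. Y \<omega> \<partial>M) = (\<Sum>x\<in>Bt - \<Lambda>. (\<integral>\<omega>. (\<Sum>y\<in>BT. ab (x - y) * (popN A T \<omega> y / Z^T)) \<partial>M))"
    unfolding Y_def by (rule Bochner_Integration.integral_sum) (rule i_out)
  also have "\<dots> = (\<Sum>x\<in>Bt - \<Lambda>. \<Sum>y\<in>BT. (\<integral>\<omega>. ab (x - y) * (popN A T \<omega> y / Z^T) \<partial>M))"
    by (intro sum.cong refl Bochner_Integration.integral_sum i_in)
  also have "\<dots> = (\<Sum>x\<in>Bt - \<Lambda>. \<Sum>y\<in>BT. rw_dist ab T y * ab (x - y))"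
    using EPT(2) Zp by (simp add: mult.commute)
  also have "\<dots> = (\<Sum>x\<in>Bt - \<Lambda>. rw_dist ab t x)" by (simp add: rwt)
  also have "\<dots> = (\<Sum>\<^sub>\<infinity>x\<in>- \<Lambda>. rw_dist ab t x)"
  proof (rule infsum_fin[symmetric])
    show "finite (Bt - \<Lambda>)" using finB by simp
    show "Bt - \<Lambda> \<subseteq> - \<Lambda>" by auto
    fix x assume "x \<in> - \<Lambda> - (Bt - \<Lambda>)"
    then have "int (t * rA) < l1norm x" by (auto simp: Bt_def Bl_def)
    then show "rw_dist ab t x = 0" using rwf[of t] by blast
  qed
  finally have EY: "(\<integral>\<omega>. Y \<omega> \<partial>M) = (\<Sum>\<^sub>\<infinity>x\<in>- \<Lambda>. rw_dist ab t x)" .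
  have J: "integrable M (\<lambda>\<omega>. Y \<omega> powr h)" "(\<integral>\<omega>. Y \<omega> powr h \<partial>M) \<le> (\<integral>\<omega>. Y \<omega> \<partial>M) powr h"
    using powr_jensen[OF Y_int Y0 h] by auto
  have m1: "(\<integral>\<omega>. f1 \<omega> - 2 * Y \<omega> powr h \<partial>M) \<le> (\<integral>\<omega>. real (card \<Lambda>) * (f1 \<omega> * tc \<omega>) \<partial>M)"
  proof (rule integral_mono_AE)
    show "integrable M (\<lambda>\<omega>. f1 \<omega> - 2 * Y \<omega> powr h)" using f1_int J(1) by simp
    show "integrable M (\<lambda>\<omega>. real (card \<Lambda>) * (f1 \<omega> * tc \<omega>))" by (rule f2_int)
    show "AE \<omega> in M. f1 \<omega> - 2 * Y \<omega> powr h \<le> real (card \<Lambda>) * (f1 \<omega> * tc \<omega>)"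
      using pw by eventually_elim auto
  qed
  have m2: "(\<integral>\<omega>. f1 \<omega> - 2 * Y \<omega> powr h \<partial>M) = (\<integral>\<omega>. f1 \<omega> \<partial>M) - 2 * (\<integral>\<omega>. Y \<omega> powr h \<partial>M)"
    using f1_int J(1) by simp
  have m3: "(\<integral>\<omega>. real (card \<Lambda>) * (f1 \<omega> * tc \<omega>) \<partial>M) = real (card \<Lambda>) * (\<integral>\<omega>. f1 \<omega> * tc \<omega> \<partial>M)"
    by simp
  have fin_ineq: "(\<integral>\<omega>. f1 \<omega> \<partial>M) - 2 * (\<Sum>\<^sub>\<infinity>x\<in>- \<Lambda>. rw_dist ab t x) powr h
      \<le> real (card \<Lambda>) * (\<integral>\<omega>. f1 \<omega> * tc \<omega> \<partial>M)"
  proof -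
    have "(\<integral>\<omega>. Y \<omega> powr h \<partial>M) \<le> (\<Sum>\<^sub>\<infinity>x\<in>- \<Lambda>. rw_dist ab t x) powr h"
      using J(2) unfolding EY .
    then show ?thesis using m1 m2 m3 by linarith
  qed
  show ?thesis
    using fin_ineq unfolding f1_def tc_def T_def abeq by simp
qed

end
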